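(* Let $c \geq 5$ be an integer, let $G$ be a graph, and let $v$ be a vertex of $G$ that has odd degree or has a neighbor of degree at most $2$. Let $Y=\{v\}\cup N_1(v)\cup N_2(v)$. If $G$ has no odd $c$-coloring, but $(G,Y)$ has a semi-odd $c$-coloring, then $2d(v) \geq 2n_1(v) + n_2(v) + n_e(v) + c$.
   Context: $N_d(v)$ is the set of neighbors of $v$ of degree exactly $d$, $n_d(v)=|N_d(v)|$, and $d(v)$ is the degree of $v$. A vertex is easy if it has degree at least $3$ and either has odd degree or has a neighbor of degree at most $2$; $n_e(v)$ is the number of easy neighbors of $v$. An odd color of a vertex (under a partial coloring) is a color appearing an odd number of times among its colored neighbors. An odd $c$-coloring of a graph is a proper coloring with at most $c$ colors in which every non-isolated vertex has an odd color. For $Y\subseteq V(G)$, a semi-odd $c$-coloring of $(G,Y)$ is a proper $c$-coloring $\phi$ of $G-Y$ such that every vertex of $G-Y$ not in $N_G(Y)$ has a color appearing an odd number of times (under $\phi$) in its neighborhood. *)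

theory Defs
  imports Main
begin

definition graph :: "'a set \<Rightarrow> ('a \<Rightarrow> 'a \<Rightarrow> bool) \<Rightarrow> bool" where
  "graph V E \<longleftrightarrow> finite V \<and> (\<forall>x y. E x y \<longrightarrow> x \<in> V \<and> y \<in> V)
     \<and> (\<forall>x y. E x y \<longrightarrow> E y x) \<and> (\<forall>x. \<not> E x x)"

definition nbrs :: "'a set \<Rightarrow> ('a \<Rightarrow> 'a \<Rightarrow> bool) \<Rightarrow> 'a \<Rightarrow> 'a set" where
  "nbrs V E v = {u \<in> V. E v u}"

definition deg :: "'a set \<Rightarrow> ('a \<Rightarrow> 'a \<Rightarrow> bool) \<Rightarrow> 'a \<Rightarrow> nat" where
  "deg V E v = card (nbrs V E v)"

definition Nd :: "'a set \<Rightarrow> ('a \<Rightarrow> 'a \<Rightarrow> bool) \<Rightarrow> nat \<Rightarrow> 'a \<Rightarrow> 'a set" where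
  "Nd V E d v = {u \<in> nbrs V E v. deg V E u = d}"

definition nd :: "'a set \<Rightarrow> ('a \<Rightarrow> 'a \<Rightarrow> bool) \<Rightarrow> nat \<Rightarrow> 'a \<Rightarrow> nat" where
  "nd V E d v = card (Nd V E d v)"

definition easy :: "'a set \<Rightarrow> ('a \<Rightarrow> 'a \<Rightarrow> bool) \<Rightarrow> 'a \<Rightarrow> bool" where
  "easy V E u \<longleftrightarrow> deg V E u \<ge> 3 \<and>
     (odd (deg V E u) \<or> (\<exists>w \<in> nbrs V E u. deg V E w \<le> 2))"

definition ne :: "'a set \<Rightarrow> ('a \<Rightarrow> 'a \<Rightarrow> bool) \<Rightarrow> 'a \<Rightarrow> nat" where
  "ne V E v = card {u \<in> nbrs V E v. easy V E u}"

definition has_odd_color :: "'a set \<Rightarrow> ('a \<Rightarrow> 'a \<Rightarrow> bool) \<Rightarrow> ('a \<Rightarrow> nat) \<Rightarrow> 'a \<Rightarrow> bool" where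
  "has_odd_color V E \<phi> x \<longleftrightarrow> (\<exists>a. odd (card {u \<in> nbrs V E x. \<phi> u = a}))"

definition odd_coloring :: "'a set \<Rightarrow> ('a \<Rightarrow> 'a \<Rightarrow> bool) \<Rightarrow> nat \<Rightarrow> ('a \<Rightarrow> nat) \<Rightarrow> bool" where
  "odd_coloring V E c \<phi> \<longleftrightarrow> (\<forall>x \<in> V. \<phi> x < c)
     \<and> (\<forall>x y. E x y \<longrightarrow> \<phi> x \<noteq> \<phi> y)
     \<and> (\<forall>x \<in> V. nbrs V E x \<noteq> {} \<longrightarrow> has_odd_color V E \<phi> x)"

text \<open>Semi-odd c-colouring of (G,Y): proper c-colouring of G - Y such that
  every (non-isolated) vertex of G - Y outside N_G(Y) has an odd colour
  in its neighbourhood (which lies entirely in G - Y).\<close>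
definition semi_odd_coloring ::
  "'a set \<Rightarrow> ('a \<Rightarrow> 'a \<Rightarrow> bool) \<Rightarrow> 'a set \<Rightarrow> nat \<Rightarrow> ('a \<Rightarrow> nat) \<Rightarrow> bool" where
  "semi_odd_coloring V E Y c \<phi> \<longleftrightarrow> (\<forall>x \<in> V - Y. \<phi> x < c)
     \<and> (\<forall>x y. x \<in> V - Y \<longrightarrow> y \<in> V - Y \<longrightarrow> E x y \<longrightarrow> \<phi> x \<noteq> \<phi> y)
     \<and> (\<forall>x \<in> V - Y. (\<forall>y \<in> Y. \<not> E x y) \<longrightarrow> nbrs V E x \<noteq> {}
          \<longrightarrow> has_odd_color V E \<phi> x)"

end

theory Submission
  imports Defs
begin

lemma parity_odd:
  assumes "finite A" "odd (card A)"
  shows "\<exists>a. odd (card {y\<in>A. f y = a})"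
proof (rule ccontr)
  assume "\<not> ?thesis"
  hence ev: "\<forall>a. even (card {y\<in>A. f y = a})" by auto
  have eq: "A = (\<Union>a\<in>f ` A. {y\<in>A. f y = a})" by auto
  have "card (\<Union>a\<in>f ` A. {y\<in>A. f y = a}) = (\<Sum>a\<in>f ` A. card {y\<in>A. f y = a})"
    by (rule card_UN_disjoint) (use assms(1) in auto)
  hence "card A = (\<Sum>a\<in>f ` A. card {y\<in>A. f y = a})" using eq by simp
  also have "even \<dots>" by (rule dvd_sum) (use ev in auto)
  finally show False using assms(2) by simp
qed

lemma parity_update:
  assumes "finite A" "v \<in> A"
  shows "\<exists>g::nat. \<forall>\<alpha>. \<alpha> \<noteq> g \<longrightarrow> (\<exists>a. odd (card {y\<in>A. (f(v:=\<alpha>)) y = a}))"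
proof (cases "\<exists>a. odd (card {y\<in>A-{v}. f y = a})")
  case True
  then obtain a where a: "odd (card {y\<in>A-{v}. f y = a})" by blast
  show ?thesis
  proof (rule exI[of _ a], intro allI impI)
    fix \<alpha> assume "\<alpha> \<noteq> a"
    hence "{y\<in>A. (f(v:=\<alpha>)) y = a} = {y\<in>A-{v}. f y = a}" by auto
    thus "\<exists>b. odd (card {y\<in>A. (f(v:=\<alpha>)) y = b})" using a by metis
  qed
next
  case False
  show ?thesis
  proof (rule exI[of _ 0], intro allI impI)
    fix \<alpha> :: nat
    have "{y\<in>A. (f(v:=\<alpha>)) y = \<alpha>} = insert v {y\<in>A-{v}. f y = \<alpha>}" using assms(2) by auto
    moreover have "finite {y\<in>A-{v}. f y = \<alpha>}" using assms(1) by auto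
    ultimately have "card {y\<in>A. (f(v:=\<alpha>)) y = \<alpha>} = Suc (card {y\<in>A-{v}. f y = \<alpha>})" by simp
    thus "\<exists>b. odd (card {y\<in>A. (f(v:=\<alpha>)) y = b})" using False by (metis even_Suc)
  qed
qed

lemma nbrs_sym: "graph V E \<Longrightarrow> x \<in> nbrs V E y \<longleftrightarrow> y \<in> nbrs V E x"
  unfolding graph_def nbrs_def by blast

lemma finite_nbrs: "graph V E \<Longrightarrow> finite (nbrs V E x)"
  unfolding graph_def nbrs_def by auto

lemma odd_color_cong:
  assumes "\<forall>y\<in>nbrs V E x. \<psi> y = \<psi>' y"
  shows "has_odd_color V E \<psi> x \<longleftrightarrow> has_odd_color V E \<psi>' x"
proof -
  have "\<And>a. {u \<in> nbrs V E x. \<psi> u = a} = {u \<in> nbrs V E x. \<psi>' u = a}" using assms by auto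
  thus ?thesis unfolding has_odd_color_def by simp
qed

lemma odd_deg_good:
  assumes "graph V E" "odd (deg V E x)"
  shows "has_odd_color V E \<psi> x"
  using parity_odd[OF finite_nbrs[OF assms(1)]] assms(2)
  unfolding has_odd_color_def deg_def by blast

lemma recolor:
  assumes g: "graph V E" and "2 * deg V E u < c"
  shows "\<exists>b<c. (\<forall>w\<in>nbrs V E u. \<psi> w \<noteq> b) \<and> (\<forall>w\<in>nbrs V E u. has_odd_color V E (\<psi>(u:=b)) w)"
proof -
  let ?N = "nbrs V E"
  define h where "h w = (SOME g::nat. \<forall>\<alpha>. \<alpha> \<noteq> g \<longrightarrow> (\<exists>a. odd (card {y\<in>?N w. (\<psi>(u:=\<alpha>)) y = a})))" for w
  have hp: "\<alpha> \<noteq> h w \<Longrightarrow> has_odd_color V E (\<psi>(u:=\<alpha>)) w" if "w \<in> ?N u" for w \<alpha>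
  proof -
    have "u \<in> ?N w" using that nbrs_sym[OF g] by blast
    from someI_ex[OF parity_update[OF finite_nbrs[OF g] this, of \<psi>]]
    show "\<alpha> \<noteq> h w \<Longrightarrow> has_odd_color V E (\<psi>(u:=\<alpha>)) w"
      unfolding h_def has_odd_color_def by blast
  qed
  define F where "F = \<psi> ` ?N u \<union> h ` ?N u"
  have "card F \<le> card (\<psi> ` ?N u) + card (h ` ?N u)" unfolding F_def by (rule card_Un_le)
  also have "\<dots> \<le> 2 * deg V E u" unfolding deg_def
    using card_image_le[OF finite_nbrs[OF g]] by (metis add_mono mult_2)
  finally have "card F < c" using assms(2) by linarith
  moreover have "finite F" unfolding F_def using finite_nbrs[OF g] by auto
  ultimately have "\<not> {0..<c} \<subseteq> F"
    using card_mono[of F "{0..<c}"] by auto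
  then obtain b where "b < c" "b \<notin> F" by (meson atLeastLessThan_iff subsetI zero_le)
  hence "\<forall>w\<in>?N u. \<psi> w \<noteq> b" "\<forall>w\<in>?N u. has_odd_color V E (\<psi>(u:=b)) w"
    using hp unfolding F_def by (force, force)
  thus ?thesis using \<open>b < c\<close> by blast
qed


definition bad :: "'a set \<Rightarrow> ('a \<Rightarrow> 'a \<Rightarrow> bool) \<Rightarrow> ('a \<Rightarrow> nat) \<Rightarrow> 'a set" where
  "bad V E \<psi> = {x\<in>V. nbrs V E x \<noteq> {} \<and> \<not> has_odd_color V E \<psi> x}"

lemma fix_lemma:
  assumes g: "graph V E"
  shows "card (bad V E \<psi>) = n \<Longrightarrow> (\<forall>x\<in>V. \<psi> x < c) \<Longrightarrow> (\<forall>x y. E x y \<longrightarrow> \<psi> x \<noteq> \<psi> y)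
    \<Longrightarrow> (\<forall>x\<in>bad V E \<psi>. \<exists>z\<in>nbrs V E x. 2 * deg V E z < c) \<Longrightarrow> \<exists>\<psi>'. odd_coloring V E c \<psi>'"
proof (induction n arbitrary: \<psi> rule: less_induct)
  case (less n \<psi>)
  have fin: "finite V" using g unfolding graph_def by auto
  show ?case
  proof (cases "bad V E \<psi> = {}")
    case True
    hence "odd_coloring V E c \<psi>" using less.prems unfolding odd_coloring_def bad_def by blast
    thus ?thesis by blast
  next
    case False
    then obtain x where x: "x \<in> bad V E \<psi>" by blast
    then obtain z where z: "z \<in> nbrs V E x" "2 * deg V E z < c" using less.prems(4) by blast
    obtain b where b: "b < c" "\<forall>w\<in>nbrs V E z. \<psi> w \<noteq> b"
      "\<forall>w\<in>nbrs V E z. has_odd_color V E (\<psi>(z:=b)) w"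
      using recolor[OF g z(2)] by blast
    define \<psi>' where "\<psi>' = \<psi>(z:=b)"
    have zV: "z \<in> V" using z(1) unfolding nbrs_def by auto
    have sub: "bad V E \<psi>' \<subseteq> bad V E \<psi> - {x}"
    proof
      fix y assume y: "y \<in> bad V E \<psi>'"
      have ynz: "y \<notin> nbrs V E z" using y b(3) unfolding bad_def \<psi>'_def by blast
      hence "z \<notin> nbrs V E y" using nbrs_sym[OF g] by blast
      hence "\<forall>w\<in>nbrs V E y. \<psi>' w = \<psi> w" unfolding \<psi>'_def by auto
      hence "has_odd_color V E \<psi>' y = has_odd_color V E \<psi> y" by (rule odd_color_cong)
      moreover have "x \<in> nbrs V E z" using z(1) nbrs_sym[OF g] by blast
      ultimately show "y \<in> bad V E \<psi> - {x}" using y ynz unfolding bad_def by auto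
    qed
    have fb: "finite (bad V E \<psi>)" using fin unfolding bad_def by auto
    have lt: "card (bad V E \<psi>') < n"
      using psubset_card_mono[OF fb, of "bad V E \<psi>'"] sub x less.prems(1) by blast
    have r: "\<forall>x\<in>V. \<psi>' x < c" using less.prems(2) b(1) unfolding \<psi>'_def by auto
    have p: "\<forall>x y. E x y \<longrightarrow> \<psi>' x \<noteq> \<psi>' y"
    proof (intro allI impI)
      fix p q assume e: "E p q"
      have "\<not> E p p" "p \<in> V" "q \<in> V" "E q p" using g e unfolding graph_def by blast+
      thus "\<psi>' p \<noteq> \<psi>' q" using less.prems(3) b(2) e unfolding \<psi>'_def nbrs_def by auto
    qed
    show ?thesis using less.IH[OF lt refl r p] sub less.prems(4) by blast
  qed
qed

lemma fix2:
  assumes g: "graph V E"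
  shows "finite P \<Longrightarrow> (\<forall>p\<in>P. 2 * deg V E p < c) \<Longrightarrow> (\<forall>x\<in>V. \<psi> x < c)
    \<Longrightarrow> (\<forall>x y. E x y \<longrightarrow> x \<notin> P \<longrightarrow> y \<notin> P \<longrightarrow> \<psi> x \<noteq> \<psi> y)
    \<Longrightarrow> \<exists>\<psi>'. (\<forall>x\<in>V. \<psi>' x < c) \<and> (\<forall>x y. E x y \<longrightarrow> \<psi>' x \<noteq> \<psi>' y) \<and> (\<forall>x. x \<notin> P \<longrightarrow> \<psi>' x = \<psi> x)"
proof (induction P arbitrary: \<psi> rule: finite_induct)
  case empty
  thus ?case by blast
next
  case (insert p P \<psi>)
  obtain b where b: "b < c" "\<forall>w\<in>nbrs V E p. \<psi> w \<noteq> b"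
    using recolor[OF g, of p c \<psi>] insert.prems(1) by blast
  define \<psi>1 where "\<psi>1 = \<psi>(p:=b)"
  have r: "\<forall>x\<in>V. \<psi>1 x < c" using insert.prems(2) b(1) unfolding \<psi>1_def by auto
  have e: "\<forall>x y. E x y \<longrightarrow> x \<notin> P \<longrightarrow> y \<notin> P \<longrightarrow> \<psi>1 x \<noteq> \<psi>1 y"
  proof (intro allI impI)
    fix x y assume a: "E x y" "x \<notin> P" "y \<notin> P"
    have "\<not> E x x" "x \<in> V" "y \<in> V" "E y x" using g a unfolding graph_def by blast+
    thus "\<psi>1 x \<noteq> \<psi>1 y" using insert.prems(3) b(2) a unfolding \<psi>1_def nbrs_def by auto
  qed
  obtain \<psi>' where "(\<forall>x\<in>V. \<psi>' x < c)" "(\<forall>x y. E x y \<longrightarrow> \<psi>' x \<noteq> \<psi>' y)" "(\<forall>x. x \<notin> P \<longrightarrow> \<psi>' x = \<psi>1 x)"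
    using insert.IH[OF _ r e] insert.prems(1) by blast
  thus ?case unfolding \<psi>1_def by auto
qed


theorem mainTheorem8:
  fixes V :: "'a set" and E :: "'a \<Rightarrow> 'a \<Rightarrow> bool" and c :: nat and v :: 'a
  assumes "graph V E"
    and "c \<ge> 5"
    and "v \<in> V"
    and "odd (deg V E v) \<or> (\<exists>u \<in> nbrs V E v. deg V E u \<le> 2)"
    and "\<not> (\<exists>\<phi>. odd_coloring V E c \<phi>)"
    and "\<exists>\<phi>. semi_odd_coloring V E ({v} \<union> Nd V E 1 v \<union> Nd V E 2 v) c \<phi>"
  shows "2 * deg V E v \<ge> 2 * nd V E 1 v + nd V E 2 v + ne V E v + c"
proof (rule ccontr)
  assume neg: "\<not> ?thesis"
  note g = assms(1)
  let ?N = "nbrs V E"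
  let ?d = "deg V E"
  define Y where "Y = {v} \<union> Nd V E 1 v \<union> Nd V E 2 v"
  define P where "P = Nd V E 1 v \<union> Nd V E 2 v"
  define N3 where "N3 = {u\<in>?N v. ?d u \<ge> 3}"
  define EZ where "EZ = {u\<in>?N v. easy V E u}"
  define H where "H = N3 - EZ"
  obtain \<phi> where phi: "semi_odd_coloring V E Y c \<phi>" using assms(6) unfolding Y_def by blast
  have finV: "finite V" using g unfolding graph_def by auto
  have NV: "?N x \<subseteq> V" for x unfolding nbrs_def by auto
  have finN: "finite (?N x)" for x using finite_nbrs[OF g] .
  have degpos: "?d u \<ge> 1" if "u \<in> ?N v" for u
  proof -
    have "v \<in> ?N u" using that nbrs_sym[OF g] by blast
    thus ?thesis unfolding deg_def using finN[of u] card_0_eq[of "?N u"] by fastforce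
  qed
  have part: "?N v = Nd V E 1 v \<union> Nd V E 2 v \<union> N3"
    using degpos unfolding Nd_def N3_def by force
  have "?d v = card (Nd V E 1 v \<union> Nd V E 2 v \<union> N3)" unfolding deg_def using part by simp
  also have "\<dots> = nd V E 1 v + nd V E 2 v + card N3"
    unfolding nd_def
    by (subst card_Un_disjoint, (use finN in \<open>auto simp: Nd_def N3_def\<close>)[3],
        subst card_Un_disjoint, (use finN in \<open>auto simp: Nd_def N3_def\<close>)[3]) simp
  finally have dv: "?d v = nd V E 1 v + nd V E 2 v + card N3" .
  have EZsub: "EZ \<subseteq> N3" unfolding EZ_def N3_def easy_def by auto
  have finN3: "finite N3" unfolding N3_def using finN by auto
  have neEZ: "ne V E v = card EZ" unfolding ne_def EZ_def by simp
  have cardH: "card H = card N3 - card EZ" unfolding H_def using card_Diff_subset[OF finite_subset[OF EZsub finN3] EZsub] .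
  have neb: "card EZ \<le> card N3" using card_mono[OF finN3 EZsub] .
  define gx where "gx x = (SOME g::nat. \<forall>\<alpha>. \<alpha> \<noteq> g \<longrightarrow> (\<exists>a. odd (card {y\<in>?N x. (\<phi>(v:=\<alpha>)) y = a})))" for x
  have gxp: "\<exists>a. odd (card {y\<in>?N x. (\<phi>(v:=\<alpha>)) y = a})" if "x \<in> ?N v" "\<alpha> \<noteq> gx x" for x \<alpha>
  proof -
    have "v \<in> ?N x" using that nbrs_sym[OF g] by blast
    from someI_ex[OF parity_update[OF finN this, of \<phi>]] show ?thesis using that(2) unfolding gx_def by blast
  qed
  define W where "W = (\<Union>u\<in>Nd V E 2 v. ?N u - {v})"
  define F where "F = \<phi> ` N3 \<union> \<phi> ` W \<union> gx ` H"
  have cW: "card W \<le> nd V E 2 v"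
  proof -
    have fin2: "finite (Nd V E 2 v)" unfolding Nd_def using finN by auto
    have "card W \<le> (\<Sum>u\<in>Nd V E 2 v. card (?N u - {v}))" unfolding W_def by (rule card_UN_le[OF fin2])
    also have "\<dots> = (\<Sum>u\<in>Nd V E 2 v. 1)"
    proof (rule sum.cong[OF refl])
      fix u assume u: "u \<in> Nd V E 2 v"
      hence "v \<in> ?N u" "card (?N u) = 2" using nbrs_sym[OF g] unfolding Nd_def deg_def by auto
      thus "card (?N u - {v}) = 1" using finN by simp
    qed
    finally show ?thesis unfolding nd_def by simp
  qed
  have finW: "finite W" using finite_subset[OF _ finV, of W] NV unfolding W_def by blast
  have cF: "card F < c"
  proof -
    have "card F \<le> card (\<phi> ` N3) + card (\<phi> ` W) + card (gx ` H)"
      unfolding F_def by (meson card_Un_le add_le_mono order_trans le_refl)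
    also have "\<dots> \<le> card N3 + card W + card H"
      by (intro add_mono card_image_le) (use finN3 finW in \<open>auto simp: H_def\<close>)
    finally show ?thesis using cW cardH neb neg dv neEZ by linarith
  qed
  have finF: "finite F" unfolding F_def H_def using finW finN3 by auto
  have "\<not> {0..<c} \<subseteq> F" using card_mono[OF finF, of "{0..<c}"] cF by auto
  then obtain \<alpha> where al: "\<alpha> < c" "\<alpha> \<notin> F" by (meson atLeastLessThan_iff subsetI zero_le)
  define \<psi>0 where "\<psi>0 = (\<lambda>x. if x \<in> Y then 0 else \<phi> x)(v:=\<alpha>)"
  have finP: "finite P" unfolding P_def Nd_def using finN by auto
  have smallP: "\<forall>p\<in>P. 2 * ?d p < c" unfolding P_def Nd_def using assms(2) by auto
  have r0: "\<forall>x\<in>V. \<psi>0 x < c" using phi al(1) assms(2) unfolding \<psi>0_def semi_odd_coloring_def by auto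
  have inN3: "y \<in> N3" if "y \<in> ?N v" "y \<notin> P" for y
    using degpos[OF that(1)] that unfolding N3_def P_def Nd_def by auto
  have e0: "\<forall>x y. E x y \<longrightarrow> x \<notin> P \<longrightarrow> y \<notin> P \<longrightarrow> \<psi>0 x \<noteq> \<psi>0 y"
  proof (intro allI impI)
    fix x y assume a: "E x y" "x \<notin> P" "y \<notin> P"
    have xy: "x \<in> V" "y \<in> V" "x \<noteq> y" "E y x" using g a(1) unfolding graph_def by blast+
    show "\<psi>0 x \<noteq> \<psi>0 y"
    proof (cases "x = v \<or> y = v")
      case True
      then show ?thesis
      proof
        assume "x = v"
        hence "y \<in> ?N v" using a xy unfolding nbrs_def by auto
        hence "y \<in> N3" using inN3 a by blast
        moreover have "y \<notin> Y" using a(3) xy \<open>x = v\<close> unfolding Y_def P_def by auto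
        ultimately show ?thesis using al(2) xy \<open>x = v\<close> unfolding \<psi>0_def F_def by auto
      next
        assume "y = v"
        hence "x \<in> ?N v" using a xy unfolding nbrs_def by auto
        hence "x \<in> N3" using inN3 a by blast
        moreover have "x \<notin> Y" using a(2) xy \<open>y = v\<close> unfolding Y_def P_def by auto
        ultimately show ?thesis using al(2) xy \<open>y = v\<close> unfolding \<psi>0_def F_def by force
      qed
    next
      case False
      hence "x \<notin> Y" "y \<notin> Y" using a unfolding Y_def P_def by auto
      thus ?thesis using phi xy a False unfolding semi_odd_coloring_def \<psi>0_def by auto
    qed
  qed
  obtain \<psi>1 where p1: "\<forall>x\<in>V. \<psi>1 x < c" "\<forall>x y. E x y \<longrightarrow> \<psi>1 x \<noteq> \<psi>1 y" "\<forall>x. x \<notin> P \<longrightarrow> \<psi>1 x = \<psi>0 x"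
    using fix2[OF g finP smallP r0 e0] by blast
  have cond: "\<forall>x\<in>bad V E \<psi>1. \<exists>z\<in>?N x. 2 * ?d z < c"
  proof
    fix x assume xb: "x \<in> bad V E \<psi>1"
    show "\<exists>z\<in>?N x. 2 * ?d z < c"
    proof (rule ccontr)
      assume ns: "\<not> ?thesis"
      have xV: "x \<in> V" and ne: "?N x \<noteq> {}" and nodd: "\<not> has_odd_color V E \<psi>1 x"
        using xb unfolding bad_def by auto
      have nsm: "\<forall>z\<in>?N x. ?d z \<ge> 3" using ns assms(2) by force
      have noP: "\<forall>z\<in>?N x. z \<notin> P" using ns smallP by blast
      have "has_odd_color V E \<psi>1 x = has_odd_color V E \<psi>0 x"
        by (rule odd_color_cong) (use noP p1(3) in auto)
      hence bad0: "\<not> has_odd_color V E \<psi>0 x" using nodd by simp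
      have evx: "even (?d x)" using odd_deg_good[OF g] nodd by blast
      show False
      proof (cases "x \<in> Y")
        case True
        then consider "x = v" | "x \<in> Nd V E 1 v" | "x \<in> Nd V E 2 v" unfolding Y_def by blast
        then show ?thesis
        proof cases
          case 1
          then show ?thesis using assms(4) evx nsm by force
        next
          case 2
          then show ?thesis using evx unfolding Nd_def by auto
        next
          case 3
          hence vx: "v \<in> ?N x" and c2: "card (?N x) = 2" using nbrs_sym[OF g] unfolding Nd_def deg_def by auto
          hence "card (?N x - {v}) = 1" using finN by simp
          then obtain w where w: "?N x - {v} = {w}" using card_1_singletonE by blast
          hence Nx: "?N x = {v, w}" and wv: "w \<noteq> v" using vx by auto
          have "w \<notin> P" using noP Nx by auto
          hence wY: "w \<notin> Y" using wv unfolding Y_def P_def by auto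
          have "w \<in> W" using 3 w unfolding W_def by auto
          hence "\<phi> w \<noteq> \<alpha>" using al(2) unfolding F_def by auto
          hence "\<psi>0 w \<noteq> \<alpha>" using wY wv unfolding \<psi>0_def by auto
          moreover have "\<psi>0 v = \<alpha>" unfolding \<psi>0_def by simp
          ultimately have "{y\<in>?N x. \<psi>0 y = \<alpha>} = {v}" using Nx by auto
          hence "odd (card {y\<in>?N x. \<psi>0 y = \<alpha>})" by simp
          hence "has_odd_color V E \<psi>0 x" unfolding has_odd_color_def by blast
          then show ?thesis using bad0 by simp
        qed
      next
        case False
        show ?thesis
        proof (cases "v \<in> ?N x")
          case True
          hence xv: "x \<in> ?N v" using nbrs_sym[OF g] by blast
          have "x \<notin> P" using False unfolding Y_def P_def by auto
          hence "x \<in> N3" using inN3 xv by blast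
          moreover have "x \<notin> EZ"
          proof
            assume "x \<in> EZ"
            hence "easy V E x" unfolding EZ_def by auto
            thus False using evx nsm unfolding easy_def by force
          qed
          ultimately have "x \<in> H" unfolding H_def by auto
          hence "\<alpha> \<noteq> gx x" using al(2) unfolding F_def by auto
          from gxp[OF xv this] obtain a where a: "odd (card {y\<in>?N x. (\<phi>(v:=\<alpha>)) y = a})" by blast
          have "{y\<in>?N x. (\<phi>(v:=\<alpha>)) y = a} = {y\<in>?N x. \<psi>0 y = a}"
          proof -
            have "\<forall>y\<in>?N x. y \<noteq> v \<longrightarrow> y \<notin> Y" using noP unfolding Y_def P_def by auto
            thus ?thesis unfolding \<psi>0_def by auto
          qed
          hence "has_odd_color V E \<psi>0 x" using a unfolding has_odd_color_def by metis
          then show ?thesis using bad0 by simp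
        next
          case nv: False
          have nY: "\<forall>y\<in>Y. \<not> E x y"
          proof (intro ballI notI)
            fix y assume "y \<in> Y" "E x y"
            hence "y \<in> ?N x" using g unfolding graph_def nbrs_def by auto
            thus False using \<open>y \<in> Y\<close> noP nv unfolding Y_def P_def by auto
          qed
          have "has_odd_color V E \<phi> x" using phi xV False nY ne unfolding semi_odd_coloring_def by blast
          moreover have "has_odd_color V E \<psi>0 x = has_odd_color V E \<phi> x"
          proof (rule odd_color_cong, intro ballI)
            fix y assume "y \<in> ?N x"
            hence "y \<notin> Y" using nY unfolding nbrs_def by auto
            thus "\<psi>0 y = \<phi> y" unfolding \<psi>0_def Y_def by auto
          qed
          ultimately show ?thesis using bad0 by simp
        qed
      qed
    qed
  qed
  show False using fix_lemma[OF g refl p1(1) p1(2) cond] assms(5) by blast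
qed

end
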